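(* Let $\mathfrak h\in\mathrm{Mult}_\rho$, let $\Delta$ be a segment admissible to $\mathfrak h$, and let $\Delta'$ be a segment linked to $\Delta$ with $\Delta'>\Delta$. The following are equivalent: (1) $(\Delta,\Delta',\mathfrak h)$ satisfies the non-overlapping property; (2) $\eta_{\Delta'}(\mathfrak h)=\eta_{\Delta'}(\mathfrak r(\Delta,\mathfrak h))$; (3) $(\Delta,\Delta',\mathfrak h)$ satisfies the intermediate segment property.
   Context: Segments: for integers $a\le b$, $[a,b]_\rho$ (think of the integer interval $\{a,\dots,b\}$), with $a(\Delta)=a$, $b(\Delta)=b$, and inclusion of segments as intervals. Two segments are linked if their union is a segment (an interval) and neither contains the other; for linked $\Delta,\Delta'$ write $\Delta<\Delta'$ (or $\Delta'>\Delta$) if $b(\Delta)<b(\Delta')$. A multisegment is a finite multiset of nonempty segments; $\mathrm{Mult}_\rho$ is the set of multisegments; $+$, $-$ are multiset sum and difference (adding an empty segment does nothing); $\mathfrak h[c]$ is the submultisegment of segments of $\mathfrak h$ starting at $c$. Write $[x,y]_\rho\prec^L[x',y']_\rho$ if $x<x'$, or $x=x'$ and $y<y'$. A segment $\Delta=[a,b]_\rho$ is admissible to $\mathfrak h$ if $\mathfrak h$ contains a segment $[a,c]_\rho$ with $c\ge b$. Removal process: for $\Delta=[a,b]_\rho$ admissible to $\mathfrak h$, let $\Delta_1=[a_1,b_1]_\rho$ be a shortest segment of $\mathfrak h$ with $a_1=a$ and $b_1\ge b$; recursively, let $\Delta_i=[a_i,b_i]_\rho$ be the $\prec^L$-minimal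 segment of $\mathfrak h$ with $a_{i-1}<a_i$ and $b\le b_i<b_{i-1}$, stopping when none exists; $\Delta_1,\dots,\Delta_r$ is the removal sequence for $(\Delta,\mathfrak h)$. Put $\Delta_i^{tr}=[a_{i+1},b_i]_\rho$ for $i<r$ and $\Delta_r^{tr}=[b+1,b_r]_\rho$ (possibly empty), and $\mathfrak r(\Delta,\mathfrak h)=\mathfrak h-\sum_i\Delta_i+\sum_i\Delta_i^{tr}$. For a segment $\Delta=[a,b]_\rho$, $\varepsilon_\Delta(\mathfrak h)=|\{\widetilde\Delta\in\mathfrak h[a]:\Delta\subset\widetilde\Delta\}|$ (with multiplicity), and $\eta_\Delta(\mathfrak h)=(\varepsilon_{[a,b]_\rho}(\mathfrak h),\varepsilon_{[a+1,b]_\rho}(\mathfrak h),\dots,\varepsilon_{[b,b]_\rho}(\mathfrak h))$. Non-overlapping property: the triple $(\Delta,\Delta',\mathfrak h)$ satisfies it if, for the shortest segment $\overline\Delta$ in the removal sequence for $(\Delta,\mathfrak h)$ that contains the point $a(\Delta')-1$, one has $\Delta'\not\subset\overline\Delta$. Intermediate segment property: the triple $(\Delta,\Delta',\mathfrak h)$ satisfies it if there is $\widetilde\Delta\in\mathfrak h$ with $a(\Delta)\le a(\widetilde\Delta)<a(\Delta')$ and $b(\Delta)\le b(\widetilde\Delta)<b(\Delta')$. *)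

theory Defs
  imports Main "HOL-Library.Multiset" "HOL-Library.Product_Lexorder"
begin

text \<open>A segment [a,b]_rho is represented by the pair (a,b) of integers; it is
nonempty iff a \<le> b. The cuspidal rho is a fixed label and plays no role.
The product order on int \<times> int (Product_Lexorder) is exactly the order \<prec>L.\<close>

type_synonym seg = "int \<times> int"

definition seg_set :: "seg \<Rightarrow> int set" where
  "seg_set d = {fst d .. snd d}"

definition nonempty_seg :: "seg \<Rightarrow> bool" where
  "nonempty_seg d \<longleftrightarrow> fst d \<le> snd d"

definition is_mult :: "seg multiset \<Rightarrow> bool" where
  "is_mult h \<longleftrightarrow> (\<forall>d \<in># h. nonempty_seg d)"

definition linked :: "seg \<Rightarrow> seg \<Rightarrow> bool" where
  "linked d e \<longleftrightarrow> (\<exists>x y. seg_set d \<union> seg_set e = {x..y})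
      \<and> \<not> seg_set d \<subseteq> seg_set e \<and> \<not> seg_set e \<subseteq> seg_set d"

definition admissible :: "seg \<Rightarrow> seg multiset \<Rightarrow> bool" where
  "admissible d h \<longleftrightarrow> (\<exists>c. c \<ge> snd d \<and> (fst d, c) \<in># h)"

definition rcand :: "seg multiset \<Rightarrow> int \<Rightarrow> seg \<Rightarrow> seg set" where
  "rcand h b p = {d \<in> set_mset h. fst p < fst d \<and> b \<le> snd d \<and> snd d < snd p}"

lemma rcand_Min:
  assumes "rcand h b p \<noteq> {}"
  shows "Min (rcand h b p) \<in> rcand h b p"
proof -
  have "finite (rcand h b p)" unfolding rcand_def by simp
  thus ?thesis using assms by (rule Min_in)
qed

text \<open>Steps 2,3,... of the removal sequence, starting after the segment p.\<close>
function rseq :: "seg multiset \<Rightarrow> int \<Rightarrow> seg \<Rightarrow> seg list" where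
  "rseq h b p = (if rcand h b p = {} then []
                 else Min (rcand h b p) # rseq h b (Min (rcand h b p)))"
  by pat_completeness auto
termination
proof (relation "measure (\<lambda>(h, b, p). nat (snd p - b))")
  fix h b p
  assume "rcand h b p \<noteq> {}"
  from rcand_Min[OF this] show "((h, b, Min (rcand h b p)), h, b, p)
      \<in> measure (\<lambda>(h, b, p). nat (snd p - b))"
    unfolding rcand_def by auto
qed auto

definition first_rem :: "seg \<Rightarrow> seg multiset \<Rightarrow> seg" where
  "first_rem D h = (fst D, Min {c. (fst D, c) \<in># h \<and> snd D \<le> c})"

definition removal_seq :: "seg \<Rightarrow> seg multiset \<Rightarrow> seg list" where
  "removal_seq D h = first_rem D h # rseq h (snd D) (first_rem D h)"

fun truncs :: "int \<Rightarrow> seg list \<Rightarrow> seg list" where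
  "truncs b [] = []"
| "truncs b [d] = [(b + 1, snd d)]"
| "truncs b (d # e # L) = (fst e, snd d) # truncs b (e # L)"

definition removal :: "seg \<Rightarrow> seg multiset \<Rightarrow> seg multiset" where
  "removal D h = h - mset (removal_seq D h)
      + filter_mset nonempty_seg (mset (truncs (snd D) (removal_seq D h)))"

definition eps :: "seg \<Rightarrow> seg multiset \<Rightarrow> nat" where
  "eps D h = size (filter_mset (\<lambda>e. fst e = fst D \<and> seg_set D \<subseteq> seg_set e) h)"

definition eta :: "seg \<Rightarrow> seg multiset \<Rightarrow> nat list" where
  "eta D h = map (\<lambda>i. eps (i, snd D) h) [fst D .. snd D]"

definition non_overlapping :: "seg \<Rightarrow> seg \<Rightarrow> seg multiset \<Rightarrow> bool" where
  "non_overlapping D D' h \<longleftrightarrow>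
     (\<exists>d \<in> set (removal_seq D h). fst D' - 1 \<in> seg_set d
        \<and> (\<forall>e \<in> set (removal_seq D h). fst D' - 1 \<in> seg_set e \<longrightarrow>
              snd d - fst d \<le> snd e - fst e)
        \<and> \<not> seg_set D' \<subseteq> seg_set d)"

definition intermediate_seg :: "seg \<Rightarrow> seg \<Rightarrow> seg multiset \<Rightarrow> bool" where
  "intermediate_seg D D' h \<longleftrightarrow>
     (\<exists>e \<in># h. fst D \<le> fst e \<and> fst e < fst D' \<and> snd D \<le> snd e \<and> snd e < snd D')"

end

theory Submission
  imports Defs
begin
declare rseq.simps[simp del]

lemma rseq_prop:
  "j \<le> length (rseq h b p) \<Longrightarrow> (rcand h b ((p # rseq h b p)!j) \<noteq> {} \<longleftrightarrow> j < length (rseq h b p))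
    \<and> (j < length (rseq h b p) \<longrightarrow> rseq h b p ! j = Min (rcand h b ((p # rseq h b p)!j)))"
proof (induction h b p arbitrary: j rule: rseq.induct)
  case (1 h b p)
  show ?case
  proof (cases "rcand h b p = {}")
    case True
    then have "rseq h b p = []" by (simp add: rseq.simps)
    with 1(2) True show ?thesis by simp
  next
    case False
    let ?q = "Min (rcand h b p)"
    have eq: "rseq h b p = ?q # rseq h b ?q" using False by (simp add: rseq.simps)
    show ?thesis
    proof (cases j)
      case 0 then show ?thesis using False eq by simp
    next
      case (Suc k)
      have "k \<le> length (rseq h b ?q)" using 1(2) Suc eq by simp
      from 1(1)[OF False this] show ?thesis using Suc eq by simp
    qed
  qed
qed

lemma L_prop:
  assumes "j < length (removal_seq D h)"
  shows "(rcand h (snd D) (removal_seq D h ! j) \<noteq> {} \<longleftrightarrow> Suc j < length (removal_seq D h))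
    \<and> (Suc j < length (removal_seq D h) \<longrightarrow> removal_seq D h ! Suc j = Min (rcand h (snd D) (removal_seq D h ! j)))"
  using rseq_prop[of j h "snd D" "first_rem D h"] assms unfolding removal_seq_def by auto

lemma truncs_nth:
  "xs \<noteq> [] \<Longrightarrow> length (truncs c xs) = length xs \<and> (\<forall>j<length xs. truncs c xs ! j
     = ((if Suc j < length xs then fst (xs!Suc j) else c+1), snd (xs!j)))"
proof (induction c xs rule: truncs.induct)
  case (3 b d e L)
  then show ?case by (auto simp: nth_Cons split: nat.split)
qed auto

lemma sum_eps:
  "sum_list (map (\<lambda>i. size (filter_mset (\<lambda>e. fst e = i \<and> Q e) M)) [lo..hi])
   = size (filter_mset (\<lambda>e. lo \<le> fst e \<and> fst e \<le> hi \<and> Q e) (M :: seg multiset))"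
proof (induction M)
  case empty
  then show ?case by simp
next
  case (add x M)
  have "sum_list (map (\<lambda>i. size (filter_mset (\<lambda>e. fst e = i \<and> Q e) (add_mset x M))) [lo..hi])
     = sum_list (map (\<lambda>i. size (filter_mset (\<lambda>e. fst e = i \<and> Q e) M) + (if i = fst x \<and> Q x then 1 else 0)) [lo..hi])"
    by (rule arg_cong[where f=sum_list], rule map_cong) auto
  also have "\<dots> = sum_list (map (\<lambda>i. size (filter_mset (\<lambda>e. fst e = i \<and> Q e) M)) [lo..hi])
     + sum_list (map (\<lambda>i. if i = fst x \<and> Q x then 1 else 0) [lo..hi])"
    by (rule sum_list_addf)
  also have "sum_list (map (\<lambda>i. if i = fst x \<and> Q x then 1 else 0) [lo..hi]) = (\<Sum>i\<in>{lo..hi}. if i = fst x \<and> Q x then 1 else (0::nat))"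
    by (simp add: sum_list_distinct_conv_sum_set)
  also have "\<dots> = (if lo \<le> fst x \<and> fst x \<le> hi \<and> Q x then 1 else 0)"
    by (cases "Q x") (auto simp: sum.delta)
  finally show ?case using add by simp
qed

lemma filter_none: "(\<forall>x\<in>#M. \<not> P x) \<Longrightarrow> filter_mset P M = {#}"
  by (simp add: filter_mset_eq_mempty_iff)

lemma distinct_sub: "distinct xs \<Longrightarrow> set xs \<subseteq> set_mset h \<Longrightarrow> mset xs \<subseteq># h"
  by (metis finite_set_mset mset_set_set mset_set_set_mset_msubset subset_imp_msubset_mset_set subset_mset.order_trans)


lemma eps_eq: "i \<le> c \<Longrightarrow> eps (i,c) M = size (filter_mset (\<lambda>e. fst e = i \<and> c \<le> snd e) M)"
  unfolding eps_def seg_set_def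
  by (rule arg_cong[where f=size], rule filter_mset_cong) auto

theorem mainTheorem17:
  fixes h :: "seg multiset" and D D' :: seg
  assumes "is_mult h"
    and "nonempty_seg D" and "nonempty_seg D'"
    and "admissible D h"
    and "linked D D'" and "snd D < snd D'"
  shows "(non_overlapping D D' h \<longleftrightarrow> eta D' h = eta D' (removal D h))
       \<and> (eta D' h = eta D' (removal D h) \<longleftrightarrow> intermediate_seg D D' h)"
proof -
  obtain a b where D: "D = (a,b)" by fastforce
  obtain a' b' where D': "D' = (a',b')" by fastforce
  have ab: "a \<le> b" using assms(2) D by (simp add: nonempty_seg_def)
  have ab': "a' \<le> b'" using assms(3) D' by (simp add: nonempty_seg_def)
  have bb': "b < b'" using assms(6) D D' by simp
  obtain x y where xy: "{a..b} \<union> {a'..b'} = {x..y}" and n1: "\<not> {a..b} \<subseteq> {a'..b'}"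
    and n2: "\<not> {a'..b'} \<subseteq> {a..b}"
    using assms(5) D D' unfolding linked_def seg_set_def by auto
  have aa': "a < a'"
  proof (rule ccontr)
    assume "\<not> a < a'"
    then have "{a..b} \<subseteq> {a'..b'}" using bb' by auto
    with n1 show False by simp
  qed
  have a'b: "a' \<le> b + 1"
  proof (rule ccontr)
    assume c: "\<not> a' \<le> b + 1"
    have "a \<in> {x..y}" "b' \<in> {x..y}" using xy[symmetric] ab ab' by auto
    then have "b + 1 \<in> {x..y}" using ab bb' by auto
    then have "b + 1 \<in> {a..b} \<union> {a'..b'}" using xy by simp
    then show False using c by auto
  qed
  define L where "L = removal_seq D h"
  define n where "n = length L"
  define C where "C = {c. (a,c) \<in># h \<and> b \<le> c}"
  have finC: "finite C"
  proof -
    have "C \<subseteq> snd ` set_mset h" unfolding C_def by force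
    then show ?thesis by (rule finite_subset) simp
  qed
  have neC: "C \<noteq> {}" using assms(4) D unfolding admissible_def C_def by auto
  have MinC: "Min C \<in> C" using finC neC by (rule Min_in)
  have L0: "L ! 0 = (a, Min C)" and npos: "0 < n"
    unfolding L_def n_def removal_seq_def first_rem_def C_def D by simp_all
  have step: "L ! Suc j \<in> rcand h b (L ! j)" if "Suc j < n" for j
  proof -
    have "rcand h b (L ! j) \<noteq> {}" "L ! Suc j = Min (rcand h b (L ! j))"
      using L_prop[of j D h] that unfolding L_def n_def D by auto
    then show ?thesis using rcand_Min by simp
  qed
  have last: "Suc j < n" if "j < n" "rcand h b (L ! j) \<noteq> {}" for j
    using L_prop[of j D h] that unfolding L_def n_def D by auto
  have minstep: "L ! Suc j = Min (rcand h b (L ! j))" if "Suc j < n" for j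
    using L_prop[of j D h] that unfolding L_def n_def D by auto
  have inh: "L ! j \<in># h" if "j < n" for j
  proof (cases j)
    case 0 then show ?thesis using L0 MinC unfolding C_def by simp
  next
    case (Suc k) then show ?thesis using step[of k] that unfolding rcand_def by auto
  qed
  have geb: "b \<le> snd (L ! j)" if "j < n" for j
  proof (cases j)
    case 0 then show ?thesis using L0 MinC unfolding C_def by simp
  next
    case (Suc k) then show ?thesis using step[of k] that unfolding rcand_def by auto
  qed
  have nej: "fst (L ! j) \<le> snd (L ! j)" if "j < n" for j
    using inh[OF that] assms(1) unfolding is_mult_def nonempty_seg_def by auto
  have mono: "fst (L ! i) < fst (L ! j) \<and> snd (L ! j) < snd (L ! i)" if "i < j" "j < n" for i j
    using that
  proof (induction j)
    case 0 then show ?case by simp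
  next
    case (Suc j)
    have s: "L ! Suc j \<in> rcand h b (L ! j)" using step Suc by simp
    then have s': "fst (L ! j) < fst (L ! Suc j) \<and> snd (L ! Suc j) < snd (L ! j)"
      unfolding rcand_def by auto
    show ?case
    proof (cases "i = j")
      case True then show ?thesis using s' by simp
    next
      case False
      then have "fst (L ! i) < fst (L ! j) \<and> snd (L ! j) < snd (L ! i)" using Suc by simp
      then show ?thesis using s' by simp
    qed
  qed
  have fsta: "a \<le> fst (L ! j)" if "j < n" for j
    using mono[of 0 j] that L0 by (cases j) auto
  have distL: "distinct L"
    unfolding distinct_conv_nth n_def[symmetric]
    by (metis linorder_neqE_nat mono order_less_irrefl)
  have setL: "set L \<subseteq> set_mset h"
  proof
    fix z assume "z \<in> set L"
    then obtain j where "j < n" "z = L ! j" unfolding n_def by (auto simp: in_set_conv_nth)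
    then show "z \<in> set_mset h" using inh by simp
  qed
  have subL: "mset L \<subseteq># h" using distinct_sub[OF distL setL] .
  define T where "T = truncs b L"
  have Tlen: "length T = n" and Tj: "\<And>j. j < n \<Longrightarrow> T ! j = ((if Suc j < n then fst (L ! Suc j) else b + 1), snd (L ! j))"
    using truncs_nth[of L b] npos unfolding T_def n_def by auto
  have hrem: "removal D h = h - mset L + filter_mset nonempty_seg (mset T)"
    unfolding removal_def L_def T_def D by simp
  define P where "P = (\<exists>j<n. fst (L ! j) < a' \<and> snd (L ! j) < b')"
  have IS: "intermediate_seg D D' h \<longleftrightarrow> P"
  proof
    assume "P"
    then obtain j where j: "j < n" "fst (L ! j) < a'" "snd (L ! j) < b'" unfolding P_def by auto
    then show "intermediate_seg D D' h" unfolding intermediate_seg_def D D'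
      using inh[OF j(1)] fsta[OF j(1)] geb[OF j(1)] by (intro bexI[of _ "L ! j"]) auto
  next
    assume "intermediate_seg D D' h"
    then obtain e where e: "e \<in># h" "a \<le> fst e" "fst e < a'" "b \<le> snd e" "snd e < b'"
      unfolding intermediate_seg_def D D' by auto
    show P
    proof (cases "fst e = a")
      case True
      then have "snd e \<in> C" using e unfolding C_def by (cases e) auto
      then have "Min C \<le> snd e" using finC by simp
      then show P unfolding P_def using L0 npos e aa' by (intro exI[of _ 0]) auto
    next
      case False
      define S where "S = {j. j < n \<and> fst (L ! j) < fst e}"
      have finS: "finite S" unfolding S_def by simp
      have "0 \<in> S" unfolding S_def using npos L0 e False by auto
      then have neS: "S \<noteq> {}" by auto
      define J where "J = Max S"
      have "J \<in> S" unfolding J_def using finS neS by simp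
      then have J: "J < n" "fst (L ! J) < fst e" unfolding S_def by auto
      have Jmax: "j \<le> J" if "j < n" "fst (L ! j) < fst e" for j
        unfolding J_def using finS that by (simp add: S_def)
      show P
      proof (cases "snd e < snd (L ! J)")
        case True
        have er: "e \<in> rcand h b (L ! J)" unfolding rcand_def using e J True by auto
        then have sJ: "Suc J < n" using last[OF J(1)] by auto
        have finr: "finite (rcand h b (L ! J))" unfolding rcand_def by simp
        have "L ! Suc J \<le> e" using minstep[OF sJ] Min_le[OF finr er] by simp
        then have le: "fst (L ! Suc J) < fst e \<or> fst (L ! Suc J) \<le> fst e \<and> snd (L ! Suc J) \<le> snd e"
          by (simp add: less_eq_prod_def)
        have "\<not> fst (L ! Suc J) < fst e" using Jmax[OF sJ] by auto
        with le have "fst (L ! Suc J) \<le> fst e" "snd (L ! Suc J) \<le> snd e" by auto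
        then show P unfolding P_def using sJ e by (intro exI[of _ "Suc J"]) auto
      next
        case False
        then show P unfolding P_def using J e by (intro exI[of _ J]) auto
      qed
    qed
  qed
  have NO: "non_overlapping D D' h \<longleftrightarrow> P"
  proof
    assume "non_overlapping D D' h"
    then obtain d where d: "d \<in> set L" "a' - 1 \<in> seg_set d" "\<not> seg_set D' \<subseteq> seg_set d"
      unfolding non_overlapping_def L_def by (auto simp: D')
    obtain j where j: "j < n" "d = L ! j" using d(1) unfolding n_def by (auto simp: in_set_conv_nth)
    have "fst d < a'" using d(2) unfolding seg_set_def by auto
    moreover have "snd d < b'"
    proof (rule ccontr)
      assume "\<not> snd d < b'"
      then have "seg_set D' \<subseteq> seg_set d" using d(2) unfolding seg_set_def D' by auto
      with d(3) show False by simp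
    qed
    ultimately show P unfolding P_def using j by auto
  next
    assume P
    then obtain q where q: "q < n" "fst (L ! q) < a'" "snd (L ! q) < b'" unfolding P_def by auto
    define S where "S = {j. j < n \<and> fst (L ! j) < a'}"
    have finS: "finite S" unfolding S_def by simp
    have "q \<in> S" unfolding S_def using q by auto
    then have neS: "S \<noteq> {}" by auto
    define K where "K = Max S"
    have "K \<in> S" unfolding K_def using finS neS by simp
    then have K: "K < n" "fst (L ! K) < a'" unfolding S_def by auto
    have Kmax: "j \<le> K" if "j < n" "fst (L ! j) < a'" for j
      unfolding K_def using finS that by (simp add: S_def)
    have qK: "q \<le> K" using Kmax q by simp
    have sK: "snd (L ! K) < b'"
    proof (cases "q = K")
      case True then show ?thesis using q by simp
    next
      case False then show ?thesis using mono[of q K] qK K q by auto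
    qed
    show "non_overlapping D D' h"
      unfolding non_overlapping_def L_def[symmetric] D' fst_conv
    proof (intro bexI[of _ "L ! K"] conjI ballI impI)
      show "L ! K \<in> set L" using K unfolding n_def by simp
      show "a' - 1 \<in> seg_set (L ! K)" unfolding seg_set_def using K geb[OF K(1)] a'b by auto
      show "\<not> seg_set (a',b') \<subseteq> seg_set (L ! K)" unfolding seg_set_def using sK ab' by auto
      fix e assume e: "e \<in> set L" "a' - 1 \<in> seg_set e"
      obtain i where i: "i < n" "e = L ! i" using e(1) unfolding n_def by (auto simp: in_set_conv_nth)
      have "fst e < a'" using e(2) unfolding seg_set_def by auto
      then have "i \<le> K" using Kmax i by simp
      then show "snd (L ! K) - fst (L ! K) \<le> snd e - fst e"
        using mono[of i K] K i by (cases "i = K") auto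
    qed
  qed
  have etaM: "eta D' M = map (\<lambda>i. size (filter_mset (\<lambda>e. fst e = i \<and> b' \<le> snd e) M)) [a'..b']" for M
    unfolding eta_def D' by (rule map_cong) (auto simp: eps_eq)
  have EQ: "eta D' h = eta D' (removal D h) \<longleftrightarrow> P"
  proof
    assume P
    then obtain q where q: "q < n" "fst (L ! q) < a'" "snd (L ! q) < b'" unfolding P_def by auto
    have noL: "\<not> (a' \<le> fst x \<and> b' \<le> snd x)" if xin: "x \<in> set L" for x
    proof
      assume x: "a' \<le> fst x \<and> b' \<le> snd x"
      obtain j where j: "j < n" "x = L ! j" using xin unfolding n_def by (auto simp: in_set_conv_nth)
      have "j \<noteq> q" using x j q by auto
      moreover have "\<not> j < q" using mono[of j q] x j q by auto
      ultimately have "q < j" by simp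
      then show False using mono[of q j] x j q by auto
    qed
    have noT: "\<not> (a' \<le> fst x \<and> b' \<le> snd x)" if xin: "x \<in> set T" for x
    proof
      assume x: "a' \<le> fst x \<and> b' \<le> snd x"
      obtain j where j: "j < n" "x = T ! j" using xin Tlen by (auto simp: in_set_conv_nth)
      have sx: "snd x = snd (L ! j)" using Tj[OF j(1)] j by simp
      have "j \<noteq> q" using x j q sx by auto
      moreover have "\<not> q < j" using mono[of q j] x j q sx by auto
      ultimately have jq: "j < q" by simp
      then have sj: "Suc j < n" using q by simp
      have "fst x = fst (L ! Suc j)" using Tj[OF j(1)] j sj by simp
      moreover have "fst (L ! Suc j) \<le> fst (L ! q)"
        using mono[of "Suc j" q] jq q by (cases "Suc j = q") auto
      ultimately show False using x q by simp
    qed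
    show "eta D' h = eta D' (removal D h)"
      unfolding etaM
    proof (rule map_cong[OF refl])
      fix i assume "i \<in> set [a'..b']"
      then have ia: "a' \<le> i" by simp
      have e1: "filter_mset (\<lambda>e. fst e = i \<and> b' \<le> snd e) (mset L) = {#}"
        by (rule filter_none) (use noL ia in auto)
      have e2: "filter_mset (\<lambda>e. fst e = i \<and> b' \<le> snd e) (filter_mset nonempty_seg (mset T)) = {#}"
        by (rule filter_none) (use noT ia in auto)
      show "size (filter_mset (\<lambda>e. fst e = i \<and> b' \<le> snd e) h)
         = size (filter_mset (\<lambda>e. fst e = i \<and> b' \<le> snd e) (removal D h))"
        unfolding hrem filter_union_mset filter_diff_mset e1 e2 by simp
    qed
  next
    assume EQ: "eta D' h = eta D' (removal D h)"
    show P
    proof (rule ccontr)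
      assume nP: "\<not> P"
      then have notP: "b' \<le> snd (L ! j)" if "j < n" "fst (L ! j) < a'" for j
        using that unfolding P_def by auto
      define G where "G = (\<lambda>e::seg. a' \<le> fst e \<and> fst e \<le> b' \<and> b' \<le> snd e)"
      have sumG: "sum_list (eta D' M) = size (filter_mset G M)" for M
        unfolding etaM sum_eps G_def by simp
      have cc: "size (filter_mset G h) = size (filter_mset G (removal D h))"
        using sumG[of h] sumG[of "removal D h"] EQ by simp
      define S1 where "S1 = {i. i < n \<and> G (L ! i)}"
      define S2 where "S2 = {i. i < n \<and> (nonempty_seg (T ! i) \<and> G (T ! i))}"
      have c1: "size (filter_mset G (mset L)) = card S1"
        unfolding S1_def n_def mset_filter[symmetric] size_mset length_filter_conv_card by simp
      have c2: "size (filter_mset G (filter_mset nonempty_seg (mset T))) = card S2"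
      proof -
        have "filter_mset G (filter_mset nonempty_seg (mset T)) = mset (filter (\<lambda>x. nonempty_seg x \<and> G x) T)"
          by (simp add: mset_filter filter_filter_mset conj_commute)
        then show ?thesis unfolding S2_def Tlen[symmetric] by (simp only: size_mset length_filter_conv_card)
      qed
      have sub: "filter_mset G (mset L) \<subseteq># filter_mset G h" using subL by (rule multiset_filter_mono)
      have cc2: "size (filter_mset G (removal D h)) = size (filter_mset G h) - card S1 + card S2"
        unfolding hrem filter_union_mset filter_diff_mset size_union size_Diff_submset[OF sub] c1 c2 ..
      have le1: "card S1 \<le> size (filter_mset G h)" using size_mset_mono[OF sub] c1 by simp
      define W where "W = {j. j < n \<and> b' \<le> snd (L ! j)}"
      have finW: "finite W" unfolding W_def by simp
      have "0 \<in> W" unfolding W_def using npos notP[of 0] L0 aa' by auto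
      then have neW: "W \<noteq> {}" by auto
      define m where "m = Max W"
      have "m \<in> W" unfolding m_def using finW neW by simp
      then have m: "m < n" "b' \<le> snd (L ! m)" unfolding W_def by auto
      have mmax: "j \<le> m" if "j < n" "b' \<le> snd (L ! j)" for j
        unfolding m_def using finW that by (simp add: W_def)
      have mS2: "m \<in> S2"
      proof (cases "Suc m < n")
        case True
        have s1: "snd (L ! Suc m) < b'" using mmax[OF True] by force
        then have f1: "a' \<le> fst (L ! Suc m)" using notP[OF True] by force
        have "fst (L ! Suc m) < b'" using nej[OF True] s1 by simp
        then show ?thesis unfolding S2_def G_def nonempty_seg_def using Tj[OF m(1)] True m f1 by auto
      next
        case False
        then show ?thesis unfolding S2_def G_def nonempty_seg_def using Tj[OF m(1)] m a'b bb' by auto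
      qed
      have S1sub: "S1 \<subseteq> Suc ` (S2 - {m})"
      proof
        fix i assume "i \<in> S1"
        then have i: "i < n" "G (L ! i)" unfolding S1_def by auto
        have "i \<noteq> 0"
        proof
          assume "i = 0" then show False using i L0 aa' unfolding G_def by simp
        qed
        then obtain j where ij: "i = Suc j" by (cases i) auto
        have sj: "snd (L ! i) < snd (L ! j)" using mono[of j i] ij i by simp
        have Tjj: "T ! j = (fst (L ! i), snd (L ! j))" using Tj[of j] ij i by simp
        have "j \<in> S2" unfolding S2_def using Tjj i sj ij unfolding G_def nonempty_seg_def by auto
        moreover have "j \<noteq> m" using mmax[of i] i ij unfolding G_def by auto
        ultimately show "i \<in> Suc ` (S2 - {m})" using ij by auto
      qed
      have finS2: "finite S2" unfolding S2_def by simp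
      have "card S1 \<le> card (Suc ` (S2 - {m}))" using S1sub finS2 by (intro card_mono) auto
      also have "\<dots> = card (S2 - {m})" by (simp add: card_image)
      also have "\<dots> < card S2" by (rule card_Diff1_less[OF finS2 mS2])
      finally have "card S1 < card S2" .
      then show False using cc cc2 le1 by simp
    qed
  qed
  show ?thesis using IS NO EQ by simp
qed
end
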